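(* Let $\mathcal{C}$ be a binary linear code of length $n$ with BPSK images $\underline s=(1-2c_0,\dots,1-2c_{n-1})$ of codewords $\underline c$. Let $\underline c^{(0)}$ be the all-zero codeword and $\underline c^{(1)},\underline c^{(2)},\underline c$ codewords such that the four are pairwise distinct; put $d_1=W_H(\underline c^{(1)})$, $d_2=W_H(\underline c^{(2)})$, $d_{1,2}=W_H(\underline c^{(1)}-\underline c^{(2)})$, $i=W_H(\underline c)$, $j=W_H(\underline c-\underline c^{(1)})$, $h=W_H(\underline c-\underline c^{(2)})$. Choose an orthonormal coordinate system $(\xi_1,\xi_2,\xi_3)$ of a three-dimensional subspace of $\mathbb{R}^n$ containing $\underline s^{(1)}-\underline s^{(0)},\underline s^{(2)}-\underline s^{(0)},\underline s-\underline s^{(0)}$ such that $\underline s^{(1)}-\underline s^{(0)}$ points along the positive $\xi_1$-axis, $\underline s^{(2)}-\underline s^{(0)}$ lies in the $\xi_1\xi_2$-plane with positive $\xi_2$-component, and $\underline s-\underline s^{(0)}$ has nonnegative $\xi_3$-component. Let $\theta\in(0,\pi)$ be the azimuth angle of $\underline s^{(2)}-\underline s^{(0)}$ (so its unit direction is $(\cos\theta,\sin\theta,0)$, with $\cos\theta=(d_1+d_2-d_{1,2})/(2\sqrt{d_1d_2})$), and let $\alpha$ and $\phi\in[0,\pi/2]$ be the azimuth and colatitude angles of $\underline s-\underline s^{(0)}$ (so its unit direction is $(\sin\phi\cos\alpha,\sin\phi\sin\alpha,\cos\phi)$). Suppose $\underline s^{(0)}$ is transmitted over the AWGN channel, $\underline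 y=\underline s^{(0)}+\underline z$ with i.i.d. $\mathcal{N}(0,\sigma^2)$ noise, $\sigma>0$. Then $$p_4(i,j,h):={\rm Pr}\big\{(\underline s^{(0)}\to\underline s^{(1)})\cup(\underline s^{(0)}\to\underline s^{(2)})\cup(\underline s^{(0)}\to\underline s)\big\}=1-\iiint_{\Omega}f(\xi_1)f(\xi_2)f(\xi_3)\,d\xi_1\,d\xi_2\,d\xi_3,$$ where $f(x)=\frac{1}{\sqrt{2\pi}\sigma}e^{-x^2/(2\sigma^2)}$ and $$\Omega=\{(\xi_1,\xi_2,\xi_3):\ \xi_1<\sqrt{d_1},\ \xi_1\cos\theta+\xi_2\sin\theta<\sqrt{d_2},\ \xi_1\sin\phi\cos\alpha+\xi_2\sin\phi\sin\alpha+\xi_3\cos\phi<\sqrt{i}\}.$$ This holds also when the four bipolar codewords form a rectangle.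
   Context: $W_H$ denotes Hamming weight. For bipolar codewords $\underline s^{(0)},\underline s$, the event $\{\underline s^{(0)}\to\underline s\}$ is $\{\underline y:\|\underline y-\underline s\|\le\|\underline y-\underline s^{(0)}\|\}$ (Euclidean norm). Euclidean and Hamming distances are related by $\|\underline s-\underline s'\|=2\sqrt{W_H(\underline c-\underline c')}$. *)

theory Defs
  imports "HOL-Probability.Probability"
begin

text \<open>Binary words of length n are modelled as bool^'n with n = CARD('n);
  True stands for the bit 1.\<close>

definition hamming_weight :: "bool^'n \<Rightarrow> nat" where
  "hamming_weight c = card {k. c $ k}"

definition bxor :: "bool^'n \<Rightarrow> bool^'n \<Rightarrow> bool^'n" where
  "bxor c c' = (\<chi> k. c $ k \<noteq> c' $ k)"

definition zero_word :: "bool^'n" where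
  "zero_word = (\<chi> k. False)"

definition binary_linear_code :: "(bool^'n) set \<Rightarrow> bool" where
  "binary_linear_code C \<longleftrightarrow> zero_word \<in> C \<and> (\<forall>a\<in>C. \<forall>b\<in>C. bxor a b \<in> C)"

definition bpsk :: "bool^'n \<Rightarrow> real^'n" where
  "bpsk c = (\<chi> k. if c $ k then -1 else 1)"

definition pairwise_error :: "real^'n \<Rightarrow> real^'n \<Rightarrow> (real^'n) set" where
  "pairwise_error s0 s = {y. norm (y - s) \<le> norm (y - s0)}"

definition awgn_output :: "real^'n \<Rightarrow> real \<Rightarrow> (real^'n) measure" where
  "awgn_output s0 \<sigma> = density lborel (\<lambda>y. ennreal (\<Prod>k\<in>UNIV. normal_density 0 \<sigma> (y $ k - s0 $ k)))"

end

theory Submission imports Defs begin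

lemma Basis_vec_real: "(Basis :: (real^'m) set) = (\<lambda>k. axis k 1) ` UNIV"
  by (auto simp: Basis_vec_def)
lemma vec_lambda_measurable:
  assumes "sets M = sets (borel :: real measure)"
  shows "(\<lambda>x. vec_lambda x :: real^'m) \<in> borel_measurable (PiM UNIV (\<lambda>_::'m. M))"
proof -
  have "(\<lambda>x. x i) \<in> borel_measurable (PiM UNIV (\<lambda>_::'m. M))" for i
  proof -
    have "(\<lambda>x. x i) \<in> PiM UNIV (\<lambda>_::'m. M) \<rightarrow>\<^sub>M M" by (rule measurable_component_singleton) simp
    then show ?thesis using measurable_cong_sets[OF refl assms] by metis
  qed
  then show ?thesis
  apply (subst borel_measurable_euclidean_space)
  apply (simp add: Basis_vec_real inner_axis)
  done
qed
lemma prod_Basis_vec: "(\<Prod>b\<in>(Basis :: (real^'m) set). f b) = (\<Prod>k\<in>UNIV. f (axis k 1))"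
  unfolding Basis_vec_real by (subst prod.reindex) (auto simp: inj_on_def axis_eq_axis)

lemma lborel_vec: "(lborel :: (real^'m) measure) = distr (PiM UNIV (\<lambda>_::'m. lborel)) borel (\<lambda>x. vec_lambda x)"
proof (rule lborel_eqI)
  interpret P: product_sigma_finite "\<lambda>_::'m. lborel :: real measure" by standard
  have meas: "(\<lambda>x. vec_lambda x :: real^'m) \<in> borel_measurable (PiM UNIV (\<lambda>_::'m. lborel))"
    by (rule vec_lambda_measurable) simp
  fix l u :: "real^'m" assume le: "\<And>b. b \<in> Basis \<Longrightarrow> l \<bullet> b \<le> u \<bullet> b"
  have le': "l $ k \<le> u $ k" for k using le[of "axis k 1"] by (simp add: Basis_vec_real inner_axis)
  have eq: "(\<lambda>x. vec_lambda x) -` box l u \<inter> space (PiM UNIV (\<lambda>_::'m. lborel)) = PiE UNIV (\<lambda>k. {l$k<..<u$k})"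
    by (auto simp: mem_box_cart space_PiM PiE_iff)
  have "emeasure (distr (PiM UNIV (\<lambda>_::'m. lborel)) borel (\<lambda>x. vec_lambda x)) (box l u)
     = emeasure (PiM UNIV (\<lambda>_::'m. lborel)) (PiE UNIV (\<lambda>k. {l$k<..<u$k}))"
    using meas by (subst emeasure_distr) (auto simp: eq)
  also have "\<dots> = (\<Prod>k\<in>UNIV. emeasure lborel {l$k<..<u$k})"
    by (rule P.emeasure_PiM) auto
  also have "\<dots> = (\<Prod>k\<in>UNIV. ennreal (u$k - l$k))"
    using le' by simp
  also have "\<dots> = ennreal (\<Prod>b\<in>Basis. (u - l) \<bullet> b)"
    by (simp add: prod_Basis_vec inner_axis prod_ennreal le')
  finally show "emeasure (distr (PiM UNIV (\<lambda>_::'m. lborel)) borel (\<lambda>x. vec_lambda x)) (box l u) = (\<Prod>b\<in>Basis. (u - l) \<bullet> b)" .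
qed (simp only: sets_distr)

definition NM :: "real \<Rightarrow> real measure" where
  "NM \<sigma> = density lborel (\<lambda>x. ennreal (normal_density 0 \<sigma> x))"

lemma sets_NM[measurable_cong, simp]: "sets (NM \<sigma>) = sets borel"
  by (simp add: NM_def)

lemma space_NM[simp]: "space (NM \<sigma>) = UNIV"
  by (simp add: NM_def)

lemma prob_NM: "\<sigma> > 0 \<Longrightarrow> prob_space (NM \<sigma>)"
  unfolding NM_def by (rule prob_space_normal_density)

lemma PiM_density_normal:
  fixes I :: "'i set"
  assumes I: "finite I" and sig: "\<sigma> > 0"
  shows "density (PiM I (\<lambda>_. lborel)) (\<lambda>x. \<Prod>i\<in>I. ennreal (normal_density 0 \<sigma> (x i))) = PiM I (\<lambda>_. NM \<sigma>)"
proof -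
  interpret N: prob_space "NM \<sigma>" by (rule prob_NM[OF sig])
  interpret PN: product_sigma_finite "\<lambda>_::'i. NM \<sigma>" by standard
  interpret PL: product_sigma_finite "\<lambda>_::'i. lborel :: real measure" by standard
  have sets_eq: "sets (PiM I (\<lambda>_. lborel :: real measure)) = sets (PiM I (\<lambda>_. NM \<sigma>))"
    by (rule sets_PiM_cong) auto
  show ?thesis
  proof (rule PN.PiM_eqI[OF I])
    show "sets (density (PiM I (\<lambda>_. lborel)) (\<lambda>x. \<Prod>i\<in>I. ennreal (normal_density 0 \<sigma> (x i)))) = sets (PiM I (\<lambda>_. NM \<sigma>))"
      using sets_eq by simp
  next
    fix A assume A: "\<And>i. i \<in> I \<Longrightarrow> A i \<in> sets (NM \<sigma>)"
    have A': "\<And>i. i \<in> I \<Longrightarrow> A i \<in> sets borel" using A by simp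
    have PiE_sets: "PiE I A \<in> sets (PiM I (\<lambda>_. lborel :: real measure))"
      using A' by (intro sets_PiM_I_finite I) auto
    have "emeasure (density (PiM I (\<lambda>_. lborel)) (\<lambda>x. \<Prod>i\<in>I. ennreal (normal_density 0 \<sigma> (x i)))) (PiE I A)
       = (\<integral>\<^sup>+x. (\<Prod>i\<in>I. ennreal (normal_density 0 \<sigma> (x i))) * indicator (PiE I A) x \<partial>PiM I (\<lambda>_. lborel))"
      using PiE_sets by (subst emeasure_density) auto
    also have "\<dots> = (\<integral>\<^sup>+x. (\<Prod>i\<in>I. ennreal (normal_density 0 \<sigma> (x i)) * indicator (A i) (x i)) \<partial>PiM I (\<lambda>_. lborel))"
      using I by (intro nn_integral_cong) (auto simp: space_PiM indicator_def prod.distrib PiE_iff prod_zero)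
    also have "\<dots> = (\<Prod>i\<in>I. \<integral>\<^sup>+y. ennreal (normal_density 0 \<sigma> y) * indicator (A i) y \<partial>lborel)"
      using A' by (intro PL.product_nn_integral_prod I) auto
    also have "\<dots> = (\<Prod>i\<in>I. emeasure (NM \<sigma>) (A i))"
      using A' by (intro prod.cong refl) (simp add: NM_def emeasure_density)
    finally show "emeasure (density (PiM I (\<lambda>_. lborel)) (\<lambda>x. \<Prod>i\<in>I. ennreal (normal_density 0 \<sigma> (x i)))) (PiE I A) = (\<Prod>i\<in>I. emeasure (NM \<sigma>) (A i))" .
  qed
qed

lemma gauss_vec:
  assumes sig: "\<sigma> > 0"
  shows "density lborel (\<lambda>w::real^'m. ennreal (\<Prod>k\<in>UNIV. normal_density 0 \<sigma> (w $ k)))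
       = distr (PiM UNIV (\<lambda>_::'m. NM \<sigma>)) borel (\<lambda>x. vec_lambda x)"
proof -
  have meas: "(\<lambda>x. vec_lambda x :: real^'m) \<in> PiM UNIV (\<lambda>_::'m. lborel) \<rightarrow>\<^sub>M borel"
    by (rule vec_lambda_measurable) simp
  have sets_eq: "sets (PiM UNIV (\<lambda>_::'m. lborel :: real measure)) = sets (PiM UNIV (\<lambda>_::'m. NM \<sigma>))"
    by (rule sets_PiM_cong) auto
  have "density lborel (\<lambda>w::real^'m. ennreal (\<Prod>k\<in>UNIV. normal_density 0 \<sigma> (w $ k)))
      = density (distr (PiM UNIV (\<lambda>_::'m. lborel)) borel (\<lambda>x. vec_lambda x)) (\<lambda>w::real^'m. ennreal (\<Prod>k\<in>UNIV. normal_density 0 \<sigma> (w $ k)))"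
    by (simp only: lborel_vec[symmetric])
  also have "\<dots> = distr (density (PiM UNIV (\<lambda>_::'m. lborel)) (\<lambda>x. ennreal (\<Prod>k\<in>UNIV. normal_density 0 \<sigma> (x k)))) borel (\<lambda>x. vec_lambda x)"
    by (subst density_distr) (use meas in auto)
  also have "density (PiM UNIV (\<lambda>_::'m. lborel)) (\<lambda>x. ennreal (\<Prod>k\<in>UNIV. normal_density 0 \<sigma> (x k)))
     = PiM UNIV (\<lambda>_::'m. NM \<sigma>)"
    using PiM_density_normal[OF _ sig, of "UNIV::'m set"] by (simp add: prod_ennreal)
  finally show ?thesis .
qed


lemma lborel_orthogonal:
  fixes T :: "real^'m::{finite,wellorder} \<Rightarrow> real^'m::{finite,wellorder}"
  assumes T: "orthogonal_transformation T"
  shows "distr lborel borel T = lborel"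
proof (rule lborel_eqI[symmetric])
  have lin: "linear T" using T orthogonal_transformation_linear by blast
  have [measurable]: "T \<in> borel_measurable borel"
    using lin by (simp add: borel_measurable_continuous_onI linear_continuous_on linear_linear)
  let ?T' = "inv T"
  have T': "orthogonal_transformation ?T'" using T orthogonal_transformation_inv by blast
  fix l u :: "real^'m::{finite,wellorder}" assume le: "\<And>b. b \<in> Basis \<Longrightarrow> l \<bullet> b \<le> u \<bullet> b"
  have pre: "T -` box l u = ?T' ` box l u"
    using T orthogonal_transformation_bij by (metis bij_vimage_eq_inv_image)
  have op: "open (?T' ` box l u)"
  proof -
    have "open (T -` box l u)"
      by (rule continuous_open_vimage) (use lin in \<open>auto intro!: linear_continuous_at simp: linear_conv_bounded_linear\<close>)
    then show ?thesis using pre by simp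
  qed
  have lm: "?T' ` box l u \<in> lmeasurable"
    by (rule measurable_orthogonal_image[OF T']) simp
  have "emeasure (distr lborel borel T) (box l u) = emeasure lborel (?T' ` box l u)"
    by (simp add: emeasure_distr pre)
  also have "\<dots> = emeasure lebesgue (?T' ` box l u)"
    using op by (simp add: emeasure_completion borel_open)
  also have "\<dots> = measure lebesgue (?T' ` box l u)"
    using lm by (simp add: emeasure_eq_measure2)
  also have "\<dots> = measure lebesgue (box l u)"
    using measure_orthogonal_image[OF T', of "box l u"] by simp
  also have "\<dots> = (\<Prod>b\<in>Basis. (u - l) \<bullet> b)"
    using le by (simp add: measure_completion measure_lborel_box_eq inner_diff_left prod_nonneg)
  finally show "emeasure (distr lborel borel T) (box l u) = (\<Prod>b\<in>Basis. (u - l) \<bullet> b)" .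
qed simp


lemma prod_normal_norm:
  fixes w :: "real^'m"
  shows "(\<Prod>k\<in>UNIV. normal_density 0 \<sigma> (w $ k)) = (1 / sqrt (2*pi*\<sigma>\<^sup>2))^CARD('m) * exp (-(norm w)\<^sup>2 / (2*\<sigma>\<^sup>2))"
proof -
  have n: "(norm w)\<^sup>2 = (\<Sum>k\<in>UNIV. (w $ k)\<^sup>2)"
  proof -
    have "(norm w)\<^sup>2 = w \<bullet> w" by (simp add: dot_square_norm)
    also have "\<dots> = (\<Sum>k\<in>UNIV. (w $ k)\<^sup>2)" by (simp add: inner_vec_def power2_eq_square)
    finally show ?thesis .
  qed
  have "(\<Prod>k\<in>UNIV. normal_density 0 \<sigma> (w $ k)) = (\<Prod>k\<in>UNIV. (1 / sqrt (2*pi*\<sigma>\<^sup>2)) * exp (-(w $ k)\<^sup>2 / (2*\<sigma>\<^sup>2)))"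
    by (simp add: normal_density_def)
  also have "\<dots> = (1 / sqrt (2*pi*\<sigma>\<^sup>2))^CARD('m) * (\<Prod>k\<in>UNIV. exp (-(w $ k)\<^sup>2 / (2*\<sigma>\<^sup>2)))"
    by (simp only: prod.distrib prod_constant)
  also have "(\<Prod>k\<in>UNIV. exp (-(w $ k)\<^sup>2 / (2*\<sigma>\<^sup>2))) = exp (\<Sum>k\<in>UNIV. -(w $ k)\<^sup>2 / (2*\<sigma>\<^sup>2))"
    by (simp add: exp_sum)
  also have "(\<Sum>k\<in>UNIV. -(w $ k)\<^sup>2 / (2*\<sigma>\<^sup>2)) = -(norm w)\<^sup>2 / (2*\<sigma>\<^sup>2)"
    by (simp add: n sum_divide_distrib sum_negf)
  finally show ?thesis .
qed

lemma gauss_rot: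
  fixes T :: "real^'m::{finite,wellorder} \<Rightarrow> real^'m::{finite,wellorder}"
  assumes T: "orthogonal_transformation T"
    and lbT: "distr lborel borel T = lborel"
  shows "distr (density lborel (\<lambda>w. ennreal (\<Prod>k\<in>UNIV. normal_density 0 \<sigma> (w $ k)))) borel T
       = density lborel (\<lambda>w. ennreal (\<Prod>k\<in>UNIV. normal_density 0 \<sigma> (w $ k)))"
proof -
  have lin: "linear T" using T orthogonal_transformation_linear by blast
  have [measurable]: "T \<in> borel_measurable borel"
    using lin by (simp add: borel_measurable_continuous_onI linear_continuous_on linear_linear)
  let ?g = "\<lambda>w. ennreal (\<Prod>k\<in>UNIV. normal_density 0 \<sigma> (w $ k))"
  have gT: "?g (T w) = ?g w" for w
    using T by (simp add: prod_normal_norm orthogonal_transformation_norm)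
  have "density lborel ?g = density (distr lborel borel T) ?g" by (simp add: lbT)
  also have "\<dots> = distr (density lborel (\<lambda>w. ?g (T w))) borel T"
    by (rule density_distr) auto
  also have "\<dots> = distr (density lborel ?g) borel T" by (simp only: gT)
  finally show ?thesis ..
qed


lemma rot_exists:
  fixes a b c :: "real^'m"
  assumes o: "a \<bullet> a = 1" "b \<bullet> b = 1" "c \<bullet> c = 1" "a \<bullet> b = 0" "a \<bullet> c = 0" "b \<bullet> c = 0"
  obtains T :: "real^'m \<Rightarrow> real^'m" and k1 k2 k3 :: 'm where "orthogonal_transformation T"
    "\<And>w. T w $ k1 = a \<bullet> w" "\<And>w. T w $ k2 = b \<bullet> w" "\<And>w. T w $ k3 = c \<bullet> w"
    "k1 \<noteq> k2" "k1 \<noteq> k3" "k2 \<noteq> k3"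
proof -
  have dist: "a \<noteq> b" "a \<noteq> c" "b \<noteq> c" using o by auto
  define S where "S = {a, b, c}"
  have oS: "pairwise orthogonal S"
    using o by (auto simp: S_def pairwise_def orthogonal_def inner_commute)
  obtain U where U1: "U \<inter> insert 0 S = {}" and U2: "pairwise orthogonal (S \<union> U)"
    and U3: "span (S \<union> U) = span (S \<union> UNIV)"
    using orthogonal_extension_strong[OF oS] by blast
  define V where "V = (\<lambda>x. x /\<^sub>R norm x) ` U"
  define B where "B = S \<union> V"
  have nS: "x \<in> S \<Longrightarrow> norm x = 1" for x
    using o by (auto simp: S_def norm_eq_1)
  have nB: "x \<in> B \<Longrightarrow> norm x = 1" for x
    using nS U1 by (auto simp: B_def V_def) (metis left_inverse norm_eq_zero)
  have oB: "pairwise orthogonal B"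
    unfolding pairwise_def
  proof (intro ballI impI)
    fix x y assume x: "x \<in> B" and y: "y \<in> B" and xy: "x \<noteq> y"
    have pw: "\<And>p q. p \<in> S \<union> U \<Longrightarrow> q \<in> S \<union> U \<Longrightarrow> p \<noteq> q \<Longrightarrow> orthogonal p q"
      using U2 by (auto simp: pairwise_def)
    have xc: "x \<in> S \<or> (\<exists>u\<in>U. x = (1 / norm u) *\<^sub>R u)" using x by (auto simp: B_def V_def divide_inverse_commute)
    have yc: "y \<in> S \<or> (\<exists>u\<in>U. y = (1 / norm u) *\<^sub>R u)" using y by (auto simp: B_def V_def divide_inverse_commute)
    show "orthogonal x y"
    proof (cases "x \<in> S")
      case xS: True
      show ?thesis
      proof (cases "y \<in> S")
        case True then show ?thesis using xS xy pw by auto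
      next
        case False
        then obtain v where v: "v \<in> U" "y = (1 / norm v) *\<^sub>R v" using yc by auto
        have "x \<noteq> v" using v U1 xS by auto
        then have "orthogonal x v" using pw xS v by auto
        then show ?thesis using v by (simp add: orthogonal_clauses)
      qed
    next
      case xnS: False
      then obtain u where u: "u \<in> U" "x = (1 / norm u) *\<^sub>R u" using xc by auto
      show ?thesis
      proof (cases "y \<in> S")
        case True
        have "y \<noteq> u" using u U1 True by auto
        then have "orthogonal u y" using pw True u by auto
        then show ?thesis using u by (simp add: orthogonal_clauses)
      next
        case False
        then obtain v where v: "v \<in> U" "y = (1 / norm v) *\<^sub>R v" using yc by auto
        have "u \<noteq> v" using u v xy by auto
        then have "orthogonal u v" using pw u v by auto
        then show ?thesis using u v by (simp add: orthogonal_clauses)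
      qed
    qed
  qed
  have z: "0 \<notin> B" using nB by force
  have ind: "independent B" by (rule pairwise_orthogonal_independent[OF oB z])
  have sp: "span B = UNIV"
  proof -
    have "S \<union> U \<subseteq> span B"
    proof
      fix x assume "x \<in> S \<union> U"
      then show "x \<in> span B"
      proof
        assume "x \<in> S" then show ?thesis by (simp add: B_def span_base)
      next
        assume xU: "x \<in> U"
        then have "x /\<^sub>R norm x \<in> B" by (simp add: B_def V_def)
        then have "norm x *\<^sub>R (x /\<^sub>R norm x) \<in> span B" by (intro span_mul span_base)
        moreover have "x \<noteq> 0" using xU U1 by auto
        ultimately show ?thesis by simp
      qed
    qed
    then have "span (S \<union> U) \<subseteq> span B" by (simp add: span_minimal)
    then show ?thesis using U3 by auto
  qed
  have finB: "finite B" using ind by (rule independent_imp_finite)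
  have cardB: "card B = CARD('m)"
    using basis_card_eq_dim[of B UNIV] ind sp by (simp add: dim_UNIV)
  obtain f where f: "bij_betw f (UNIV :: 'm set) B"
    using finite_same_card_bij[of "UNIV::'m set" B] finB cardB by auto
  define A :: "real^'m^'m" where "A = (\<chi> i j. f i $ j)"
  have Aw: "(A *v w) $ i = f i \<bullet> w" for i w
    by (simp add: A_def matrix_vector_mult_def inner_vec_def)
  have fB: "f i \<in> B" for i using f by (auto simp: bij_betw_def)
  have finj: "inj f" using f by (auto simp: bij_betw_def)
  have orthA: "orthogonal_matrix A"
    unfolding orthogonal_matrix_orthonormal_rows
  proof (intro conjI allI impI)
    fix i show "norm (row i A) = 1" using nB[OF fB[of i]] by (simp add: row_def A_def vec_nth_inverse)
  next
    fix i j :: 'm assume "i \<noteq> j"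
    then have "f i \<noteq> f j" using finj by (auto simp: inj_def)
    then show "orthogonal (row i A) (row j A)"
      using oB fB[of i] fB[of j] by (simp add: row_def A_def vec_nth_inverse pairwise_def)
  qed
  have OT: "orthogonal_transformation (\<lambda>w. A *v w)"
    using orthA by (simp add: orthogonal_transformation_matrix matrix_of_matrix_vector_mul matrix_vector_mul_linear)
  define k1 where "k1 = inv_into UNIV f a"
  define k2 where "k2 = inv_into UNIV f b"
  define k3 where "k3 = inv_into UNIV f c"
  have inB: "a \<in> B" "b \<in> B" "c \<in> B" by (auto simp: B_def S_def)
  have fk: "f k1 = a" "f k2 = b" "f k3 = c"
    using inB f by (auto simp: k1_def k2_def k3_def bij_betw_inv_into_right)
  show thesis
  proof (rule that[of "\<lambda>w. A *v w" k1 k2 k3])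
    show "orthogonal_transformation (\<lambda>w. A *v w)" by (rule OT)
  qed (use fk dist Aw in auto)
qed


lemma marg:
  fixes f :: "'i \<Rightarrow> 'm" and I :: "'i set"
  assumes sig: "\<sigma> > 0" and inj: "inj_on f I" and B: "B \<in> sets (PiM I (\<lambda>_. NM \<sigma>))"
  shows "emeasure (PiM UNIV (\<lambda>_::'m. NM \<sigma>)) ((\<lambda>\<omega>. \<lambda>n\<in>I. \<omega> (f n)) -` B \<inter> space (PiM UNIV (\<lambda>_::'m. NM \<sigma>)))
       = emeasure (PiM I (\<lambda>_. NM \<sigma>)) B"
proof -
  have D: "distr (PiM UNIV (\<lambda>_::'m. NM \<sigma>)) (PiM I (\<lambda>_. NM \<sigma>)) (\<lambda>\<omega>. \<lambda>n\<in>I. \<omega> (f n)) = PiM I (\<lambda>_. NM \<sigma>)"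
    using distr_PiM_reindex[of "UNIV::'m set" "\<lambda>_. NM \<sigma>" f I] prob_NM[OF sig] inj by auto
  have meas: "(\<lambda>\<omega>. \<lambda>n\<in>I. \<omega> (f n)) \<in> PiM UNIV (\<lambda>_::'m. NM \<sigma>) \<rightarrow>\<^sub>M PiM I (\<lambda>_. NM \<sigma>)"
    by (intro measurable_restrict measurable_component_singleton) auto
  have "emeasure (PiM I (\<lambda>_. NM \<sigma>)) B = emeasure (distr (PiM UNIV (\<lambda>_::'m. NM \<sigma>)) (PiM I (\<lambda>_. NM \<sigma>)) (\<lambda>\<omega>. \<lambda>n\<in>I. \<omega> (f n))) B"
    by (simp only: D)
  also have "\<dots> = emeasure (PiM UNIV (\<lambda>_::'m. NM \<sigma>)) ((\<lambda>\<omega>. \<lambda>n\<in>I. \<omega> (f n)) -` B \<inter> space (PiM UNIV (\<lambda>_::'m. NM \<sigma>)))"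
    by (rule emeasure_distr[OF meas B])
  finally show ?thesis ..
qed

lemma triple:
  fixes S :: "(real \<times> real \<times> real) set"
  assumes sig: "\<sigma> > 0" and S[measurable]: "S \<in> sets borel"
  shows "emeasure (PiM {0,1,2::nat} (\<lambda>_. NM \<sigma>)) {y \<in> space (PiM {0,1,2::nat} (\<lambda>_. NM \<sigma>)). (y 0, y 1, y 2) \<in> S}
       = emeasure (NM \<sigma> \<Otimes>\<^sub>M (NM \<sigma> \<Otimes>\<^sub>M NM \<sigma>)) S"
proof -
  interpret N: prob_space "NM \<sigma>" by (rule prob_NM[OF sig])
  interpret P: product_sigma_finite "\<lambda>_::nat. NM \<sigma>" by standard
  interpret N2: pair_prob_space "NM \<sigma>" "NM \<sigma>" by standard
  have p2: "prob_space (NM \<sigma> \<Otimes>\<^sub>M NM \<sigma>)" by (intro prob_space_pair N.prob_space_axioms)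
  have sf2: "sigma_finite_measure (NM \<sigma> \<Otimes>\<^sub>M NM \<sigma>)" by (rule prob_space_imp_sigma_finite[OF p2])
  let ?F = "\<lambda>p. indicator S p :: ennreal"
  have s3: "sets (NM \<sigma> \<Otimes>\<^sub>M (NM \<sigma> \<Otimes>\<^sub>M NM \<sigma>)) = sets (borel :: (real \<times> real \<times> real) measure)"
  proof -
    have "sets (NM \<sigma> \<Otimes>\<^sub>M (NM \<sigma> \<Otimes>\<^sub>M NM \<sigma>)) = sets (borel \<Otimes>\<^sub>M (borel \<Otimes>\<^sub>M (borel :: real measure)))"
      by (intro sets_pair_measure_cong) auto
    also have "\<dots> = sets (borel :: (real \<times> real \<times> real) measure)" by (simp only: borel_prod)
    finally show ?thesis .
  qed
  have Sm: "S \<in> sets (NM \<sigma> \<Otimes>\<^sub>M (NM \<sigma> \<Otimes>\<^sub>M NM \<sigma>))" using S s3 by simp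
  have [measurable]: "?F \<in> borel_measurable (NM \<sigma> \<Otimes>\<^sub>M (NM \<sigma> \<Otimes>\<^sub>M NM \<sigma>))" using Sm by simp
  have "emeasure (PiM {0,1,2::nat} (\<lambda>_. NM \<sigma>)) {y \<in> space (PiM {0,1,2::nat} (\<lambda>_. NM \<sigma>)). (y 0, y 1, y 2) \<in> S}
      = (\<integral>\<^sup>+y. ?F (y 0, y 1, y 2) \<partial>PiM {0,1,2::nat} (\<lambda>_. NM \<sigma>))"
  proof -
    have setm: "{y \<in> space (PiM {0,1,2::nat} (\<lambda>_. NM \<sigma>)). (y 0, y 1, y 2) \<in> S} \<in> sets (PiM {0,1,2::nat} (\<lambda>_. NM \<sigma>))"
      by measurable
    have "emeasure (PiM {0,1,2::nat} (\<lambda>_. NM \<sigma>)) {y \<in> space (PiM {0,1,2::nat} (\<lambda>_. NM \<sigma>)). (y 0, y 1, y 2) \<in> S}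
      = (\<integral>\<^sup>+y. indicator {y \<in> space (PiM {0,1,2::nat} (\<lambda>_. NM \<sigma>)). (y 0, y 1, y 2) \<in> S} y \<partial>PiM {0,1,2::nat} (\<lambda>_. NM \<sigma>))"
      by (rule nn_integral_indicator[symmetric, OF setm])
    also have "\<dots> = (\<integral>\<^sup>+y. ?F (y 0, y 1, y 2) \<partial>PiM {0,1,2::nat} (\<lambda>_. NM \<sigma>))"
    proof (rule nn_integral_cong)
      fix y assume y: "y \<in> space (PiM {0,1,2::nat} (\<lambda>_. NM \<sigma>))"
      show "indicator {y \<in> space (PiM {0,1,2::nat} (\<lambda>_. NM \<sigma>)). (y 0, y 1, y 2) \<in> S} y = ?F (y 0, y 1, y 2)"
        using y unfolding indicator_def by (simp only: mem_Collect_eq simp_thms)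
    qed
    finally show ?thesis .
  qed
  also have "\<dots> = (\<integral>\<^sup>+a. (\<integral>\<^sup>+x. ?F (a, x 1, x 2) \<partial>PiM {1,2::nat} (\<lambda>_. NM \<sigma>)) \<partial>NM \<sigma>)"
  proof -
    have m: "(\<lambda>y. ?F (y 0, y 1, y 2)) \<in> borel_measurable (PiM (insert 0 {1,2::nat}) (\<lambda>_. NM \<sigma>))"
      by measurable
    show ?thesis
      by (subst P.product_nn_integral_insert_rev[OF _ _ m]) simp_all
  qed
  also have "\<dots> = (\<integral>\<^sup>+a. (\<integral>\<^sup>+b. (\<integral>\<^sup>+x. ?F (a, b, x 2) \<partial>PiM {2::nat} (\<lambda>_. NM \<sigma>)) \<partial>NM \<sigma>) \<partial>NM \<sigma>)"
  proof (intro nn_integral_cong)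
    fix a
    have m: "(\<lambda>x. ?F (a, x 1, x 2)) \<in> borel_measurable (PiM (insert 1 {2::nat}) (\<lambda>_. NM \<sigma>))"
      by measurable
    show "(\<integral>\<^sup>+x. ?F (a, x 1, x 2) \<partial>PiM {1,2::nat} (\<lambda>_. NM \<sigma>)) = (\<integral>\<^sup>+b. (\<integral>\<^sup>+x. ?F (a, b, x 2) \<partial>PiM {2::nat} (\<lambda>_. NM \<sigma>)) \<partial>NM \<sigma>)"
      by (subst P.product_nn_integral_insert_rev[OF _ _ m]) simp_all
  qed
  also have "\<dots> = (\<integral>\<^sup>+a. (\<integral>\<^sup>+b. (\<integral>\<^sup>+c. ?F (a, b, c) \<partial>NM \<sigma>) \<partial>NM \<sigma>) \<partial>NM \<sigma>)"
    by (intro nn_integral_cong) (rule P.product_nn_integral_singleton[of "\<lambda>c. ?F (_, _, c)" 2, simplified], measurable)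
  also have "\<dots> = (\<integral>\<^sup>+a. (\<integral>\<^sup>+q. ?F (a, q) \<partial>(NM \<sigma> \<Otimes>\<^sub>M NM \<sigma>)) \<partial>NM \<sigma>)"
    by (intro nn_integral_cong) (rule N.nn_integral_fst, measurable)
  also have "\<dots> = (\<integral>\<^sup>+p. ?F p \<partial>(NM \<sigma> \<Otimes>\<^sub>M (NM \<sigma> \<Otimes>\<^sub>M NM \<sigma>)))"
    using sigma_finite_measure.nn_integral_fst[OF sf2, of "indicator S" "NM \<sigma>"] Sm by simp
  also have "\<dots> = emeasure (NM \<sigma> \<Otimes>\<^sub>M (NM \<sigma> \<Otimes>\<^sub>M NM \<sigma>)) S"
    using Sm by simp
  finally show ?thesis .
qed

lemma norm_bpsk_diff:
  fixes c :: "bool^'n"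
  shows "norm (bpsk c - bpsk zero_word) = 2 * sqrt (real (hamming_weight c))"
proof -
  have "(norm (bpsk c - bpsk zero_word))\<^sup>2 = (bpsk c - bpsk zero_word) \<bullet> (bpsk c - bpsk zero_word)"
    by (simp add: dot_square_norm)
  also have "\<dots> = (\<Sum>k\<in>UNIV. if c $ k then 4 else 0)"
    by (auto simp: inner_vec_def bpsk_def zero_word_def intro!: sum.cong)
  also have "\<dots> = 4 * real (hamming_weight c)"
    by (simp add: sum.If_cases hamming_weight_def)
  finally have h: "(norm (bpsk c - bpsk zero_word))\<^sup>2 = 4 * real (hamming_weight c)" .
  have "sqrt (4 * real (hamming_weight c)) = norm (bpsk c - bpsk zero_word)"
    by (rule real_sqrt_unique[OF h]) simp
  moreover have "sqrt (4::real) = 2" by (rule real_sqrt_unique) auto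
  ultimately show ?thesis by (simp add: real_sqrt_mult)
qed

lemma bpsk_diff_nz:
  fixes c :: "bool^'n"
  assumes "c \<noteq> zero_word"
  shows "bpsk c - bpsk zero_word \<noteq> 0"
proof
  assume h: "bpsk c - bpsk zero_word = 0"
  have "c = zero_word"
  proof (rule vec_eq_iff[THEN iffD2], rule allI)
    fix k
    have "(bpsk c - bpsk zero_word) $ k = 0" using h by simp
    then show "c $ k = zero_word $ k" by (auto simp: bpsk_def zero_word_def split: if_splits)
  qed
  with assms show False by simp
qed

lemma pe_char:
  fixes c :: "bool^'n" and u :: "real^'n"
  assumes nz: "c \<noteq> zero_word"
    and dir: "bpsk c - bpsk zero_word = norm (bpsk c - bpsk zero_word) *\<^sub>R u"
  shows "y \<in> pairwise_error (bpsk zero_word) (bpsk c) \<longleftrightarrow>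
         (y - bpsk zero_word) \<bullet> u \<ge> sqrt (real (hamming_weight c))"
proof -
  define d where "d = bpsk c - bpsk zero_word"
  define z where "z = y - bpsk zero_word"
  define r where "r = norm d"
  have rpos: "r > 0" using bpsk_diff_nz[OF nz] by (simp add: r_def d_def)
  have r2: "r = 2 * sqrt (real (hamming_weight c))" by (simp add: r_def d_def norm_bpsk_diff)
  have dd: "d = r *\<^sub>R u" using dir by (simp add: d_def r_def)
  have uu: "u \<bullet> u = 1"
  proof -
    have "r = norm (r *\<^sub>R u)" using dd by (simp add: r_def)
    then have "r = r * norm u" using rpos by simp
    then have "norm u = 1" using rpos by simp
    then show ?thesis by (simp add: dot_square_norm)
  qed
  have ys: "y - bpsk c = z - d" by (simp add: z_def d_def)
  have "y \<in> pairwise_error (bpsk zero_word) (bpsk c) \<longleftrightarrow> norm (z - d) \<le> norm z"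
    by (simp add: pairwise_error_def ys z_def)
  also have "\<dots> \<longleftrightarrow> (norm (z - d))\<^sup>2 \<le> (norm z)\<^sup>2"
    by (simp add: power_mono_iff)
  also have "\<dots> \<longleftrightarrow> (z - d) \<bullet> (z - d) \<le> z \<bullet> z"
    by (simp add: dot_square_norm)
  also have "\<dots> \<longleftrightarrow> r * r \<le> 2 * r * (z \<bullet> u)"
    by (simp add: dd inner_diff_left inner_diff_right inner_commute algebra_simps uu)
  also have "\<dots> \<longleftrightarrow> r / 2 \<le> z \<bullet> u"
    using rpos by (auto simp: field_simps)
  finally show ?thesis by (simp add: r2 z_def)
qed


lemma inj_to_bit0: "\<exists>\<iota> :: 'n::finite \<Rightarrow> 'n bit0. inj \<iota>"
proof -
  have "card (UNIV :: 'n set) \<le> card (UNIV :: 'n bit0 set)" by simp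
  then obtain f :: "'n \<Rightarrow> 'n bit0" where "f ` UNIV \<subseteq> UNIV" "inj_on f UNIV"
    using card_le_inj[of "UNIV :: 'n set" "UNIV :: 'n bit0 set"] by auto
  then show ?thesis by auto
qed

definition emb :: "('n \<Rightarrow> 'm) \<Rightarrow> real^'n \<Rightarrow> real^'m" where
  "emb \<iota> a = (\<chi> j. if j \<in> range \<iota> then a $ (inv \<iota> j) else 0)"

lemma emb_inner:
  fixes \<iota> :: "'n::finite \<Rightarrow> 'm::finite"
  assumes inj: "inj \<iota>"
  shows "(vec_lambda \<omega> :: real^'m) \<bullet> emb \<iota> a = (vec_lambda (\<lambda>k. \<omega> (\<iota> k)) :: real^'n) \<bullet> a"
proof -
  have "(vec_lambda \<omega> :: real^'m) \<bullet> emb \<iota> a = (\<Sum>j\<in>UNIV. \<omega> j * (if j \<in> range \<iota> then a $ (inv \<iota> j) else 0))"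
    by (simp add: inner_vec_def emb_def)
  also have "\<dots> = (\<Sum>j\<in>range \<iota>. \<omega> j * a $ (inv \<iota> j))"
    by (rule sum.mono_neutral_cong_right) auto
  also have "\<dots> = (\<Sum>k\<in>UNIV. \<omega> (\<iota> k) * a $ k)"
    using inj by (subst sum.reindex) auto
  also have "\<dots> = (vec_lambda (\<lambda>k. \<omega> (\<iota> k)) :: real^'n) \<bullet> a"
    by (simp add: inner_vec_def)
  finally show ?thesis .
qed

lemma emb_inner2:
  fixes \<iota> :: "'n::finite \<Rightarrow> 'm::finite"
  assumes inj: "inj \<iota>"
  shows "emb \<iota> a \<bullet> emb \<iota> b = a \<bullet> b"
proof -
  have "emb \<iota> a \<bullet> emb \<iota> b = (vec_lambda (\<lambda>j. emb \<iota> a $ j) :: real^'m) \<bullet> emb \<iota> b"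
    by (simp add: vec_nth_inverse)
  also have "\<dots> = (vec_lambda (\<lambda>k. emb \<iota> a $ (\<iota> k)) :: real^'n) \<bullet> b"
    by (rule emb_inner[OF inj])
  also have "(\<lambda>k. emb \<iota> a $ (\<iota> k)) = (\<lambda>k. a $ k)"
    using inj by (auto simp: emb_def)
  finally show ?thesis by (simp add: vec_nth_inverse)
qed

lemma emeasure_distr_Collect:
  assumes "f \<in> M \<rightarrow>\<^sub>M N" "A \<in> sets N"
  shows "emeasure (distr M N f) A = emeasure M {x \<in> space M. f x \<in> A}"
  using emeasure_distr[OF assms] by (simp add: vimage_def Int_def conj_commute)

lemma vec_meas_NM[measurable]: "(\<lambda>x. vec_lambda x :: real^'m) \<in> borel_measurable (PiM UNIV (\<lambda>_::'m. NM \<sigma>))"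
  by (rule vec_lambda_measurable) simp

lemma gauss_proj:
  fixes e1 e2 e3 :: "real^'n"
  assumes sig: "\<sigma> > 0"
    and o: "e1 \<bullet> e1 = 1" "e2 \<bullet> e2 = 1" "e3 \<bullet> e3 = 1" "e1 \<bullet> e2 = 0" "e1 \<bullet> e3 = 0" "e2 \<bullet> e3 = 0"
    and S[measurable]: "S \<in> sets (borel :: (real \<times> real \<times> real) measure)"
  shows "emeasure (density lborel (\<lambda>w::real^'n. ennreal (\<Prod>k\<in>UNIV. normal_density 0 \<sigma> (w $ k))))
            {z. (z \<bullet> e1, z \<bullet> e2, z \<bullet> e3) \<in> S}
       = emeasure (NM \<sigma> \<Otimes>\<^sub>M (NM \<sigma> \<Otimes>\<^sub>M NM \<sigma>)) S"
proof -
  obtain \<iota> :: "'n \<Rightarrow> 'n bit0" where inj: "inj \<iota>" using inj_to_bit0 by blast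
  define a1 where "a1 = emb \<iota> e1"
  define a2 where "a2 = emb \<iota> e2"
  define a3 where "a3 = emb \<iota> e3"
  have o': "a1 \<bullet> a1 = 1" "a2 \<bullet> a2 = 1" "a3 \<bullet> a3 = 1" "a1 \<bullet> a2 = 0" "a1 \<bullet> a3 = 0" "a2 \<bullet> a3 = 0"
    using o by (simp_all add: a1_def a2_def a3_def emb_inner2[OF inj])
  obtain T :: "real^'n bit0 \<Rightarrow> real^'n bit0" and k1 k2 k3 where T: "orthogonal_transformation T"
    and Tk: "\<And>w. T w $ k1 = a1 \<bullet> w" "\<And>w. T w $ k2 = a2 \<bullet> w" "\<And>w. T w $ k3 = a3 \<bullet> w"
    and kd: "k1 \<noteq> k2" "k1 \<noteq> k3" "k2 \<noteq> k3"
    using rot_exists[OF o'] by blast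
  have lT: "distr lborel borel T = lborel" by (rule lborel_orthogonal[OF T])
  have Tm[measurable]: "T \<in> borel_measurable borel"
  proof -
    have "linear T" using T orthogonal_transformation_linear by blast
    then show ?thesis by (simp add: borel_measurable_continuous_onI linear_continuous_on linear_linear)
  qed
  define Gn where "Gn = density lborel (\<lambda>w::real^'n. ennreal (\<Prod>k\<in>UNIV. normal_density 0 \<sigma> (w $ k)))"
  define Gm where "Gm = density lborel (\<lambda>w::real^'n bit0. ennreal (\<Prod>k\<in>UNIV. normal_density 0 \<sigma> (w $ k)))"
  define Qn where "Qn = PiM UNIV (\<lambda>_::'n. NM \<sigma>)"
  define Qm where "Qm = PiM UNIV (\<lambda>_::'n bit0. NM \<sigma>)"
  have gR: "distr Gm borel T = Gm" unfolding Gm_def by (rule gauss_rot[OF T lT])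
  have gvn: "Gn = distr Qn borel (\<lambda>x. vec_lambda x)" unfolding Gn_def Qn_def by (rule gauss_vec[OF sig])
  have gvm: "Gm = distr Qm borel (\<lambda>x. vec_lambda x)" unfolding Gm_def Qm_def by (rule gauss_vec[OF sig])
  have spQn: "space Qn = UNIV" by (simp add: Qn_def space_PiM)
  have spQm: "space Qm = UNIV" by (simp add: Qm_def space_PiM)
  have "emeasure Gn {z. (z \<bullet> e1, z \<bullet> e2, z \<bullet> e3) \<in> S}
      = emeasure Qn {x \<in> space Qn. ((vec_lambda x :: real^'n) \<bullet> e1, (vec_lambda x :: real^'n) \<bullet> e2, (vec_lambda x :: real^'n) \<bullet> e3) \<in> S}"
  proof -
    have Xm: "{z::real^'n. (z \<bullet> e1, z \<bullet> e2, z \<bullet> e3) \<in> S} \<in> sets borel" by measurable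
    show ?thesis unfolding gvn Qn_def
      by (subst emeasure_distr_Collect[OF vec_meas_NM Xm]) simp
  qed
  also have "\<dots> = emeasure Qm ((\<lambda>\<omega>. \<lambda>k\<in>UNIV. \<omega> (\<iota> k)) -` {x \<in> space Qn. ((vec_lambda x :: real^'n) \<bullet> e1, (vec_lambda x :: real^'n) \<bullet> e2, (vec_lambda x :: real^'n) \<bullet> e3) \<in> S} \<inter> space Qm)"
  proof -
    have Bm: "{x \<in> space Qn. ((vec_lambda x :: real^'n) \<bullet> e1, (vec_lambda x :: real^'n) \<bullet> e2, (vec_lambda x :: real^'n) \<bullet> e3) \<in> S} \<in> sets (PiM UNIV (\<lambda>_::'n. NM \<sigma>))"
      unfolding Qn_def by measurable
    show ?thesis
      unfolding Qm_def Qn_def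
      by (rule marg[OF sig _ Bm[unfolded Qn_def], symmetric]) (use inj in simp)
  qed
  also have "\<dots> = emeasure Qm {\<omega> \<in> space Qm. ((vec_lambda \<omega> :: real^'n bit0) \<bullet> a1, (vec_lambda \<omega> :: real^'n bit0) \<bullet> a2, (vec_lambda \<omega> :: real^'n bit0) \<bullet> a3) \<in> S}"
    by (rule arg_cong[where f="emeasure Qm"]) (auto simp: spQn spQm a1_def a2_def a3_def emb_inner[OF inj] restrict_def)
  also have "\<dots> = emeasure Gm {w. (a1 \<bullet> w, a2 \<bullet> w, a3 \<bullet> w) \<in> S}"
  proof -
    have Xm: "{w::real^'n bit0. (a1 \<bullet> w, a2 \<bullet> w, a3 \<bullet> w) \<in> S} \<in> sets borel" by measurable
    show ?thesis unfolding gvm Qm_def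
      by (subst emeasure_distr_Collect[OF vec_meas_NM Xm]) (simp add: inner_commute)
  qed
  also have "\<dots> = emeasure Gm (T -` {v. (v $ k1, v $ k2, v $ k3) \<in> S} \<inter> space Gm)"
    by (rule arg_cong[where f="emeasure Gm"]) (auto simp: Gm_def Tk inner_commute)
  also have "\<dots> = emeasure Gm {v. (v $ k1, v $ k2, v $ k3) \<in> S}"
  proof -
    have Vm: "{v::real^'n bit0. (v $ k1, v $ k2, v $ k3) \<in> S} \<in> sets borel" by measurable
    have "emeasure Gm (T -` {v. (v $ k1, v $ k2, v $ k3) \<in> S} \<inter> space Gm) = emeasure (distr Gm borel T) {v. (v $ k1, v $ k2, v $ k3) \<in> S}"
      by (rule emeasure_distr[symmetric]) (auto simp: Gm_def Vm)
    then show ?thesis using gR by simp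
  qed
  also have "\<dots> = emeasure Qm {\<omega> \<in> space Qm. (\<omega> k1, \<omega> k2, \<omega> k3) \<in> S}"
  proof -
    have Vm: "{v::real^'n bit0. (v $ k1, v $ k2, v $ k3) \<in> S} \<in> sets borel" by measurable
    show ?thesis unfolding gvm Qm_def
      by (subst emeasure_distr_Collect[OF vec_meas_NM Vm]) simp
  qed
  also have "\<dots> = emeasure (PiM {0,1,2::nat} (\<lambda>_. NM \<sigma>)) {y \<in> space (PiM {0,1,2::nat} (\<lambda>_. NM \<sigma>)). (y 0, y 1, y 2) \<in> S}"
  proof -
    define f :: "nat \<Rightarrow> 'n bit0" where "f n = (if n = 0 then k1 else if n = 1 then k2 else k3)" for n
    have finj: "inj_on f {0,1,2}" using kd by (auto simp: f_def inj_on_def)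
    have B3: "{y \<in> space (PiM {0,1,2::nat} (\<lambda>_. NM \<sigma>)). (y 0, y 1, y 2) \<in> S} \<in> sets (PiM {0,1,2::nat} (\<lambda>_. NM \<sigma>))"
      by measurable
    have "emeasure Qm ((\<lambda>\<omega>. \<lambda>n\<in>{0,1,2}. \<omega> (f n)) -` {y \<in> space (PiM {0,1,2::nat} (\<lambda>_. NM \<sigma>)). (y 0, y 1, y 2) \<in> S} \<inter> space Qm)
       = emeasure (PiM {0,1,2::nat} (\<lambda>_. NM \<sigma>)) {y \<in> space (PiM {0,1,2::nat} (\<lambda>_. NM \<sigma>)). (y 0, y 1, y 2) \<in> S}"
      unfolding Qm_def by (rule marg[OF sig finj B3])
    moreover have "(\<lambda>\<omega>. \<lambda>n\<in>{0,1,2}. \<omega> (f n)) -` {y \<in> space (PiM {0,1,2::nat} (\<lambda>_. NM \<sigma>)). (y 0, y 1, y 2) \<in> S} \<inter> space Qm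
       = {\<omega> \<in> space Qm. (\<omega> k1, \<omega> k2, \<omega> k3) \<in> S}"
      by (auto simp: f_def space_PiM spQm)
    ultimately show ?thesis by simp
  qed
  also have "\<dots> = emeasure (NM \<sigma> \<Otimes>\<^sub>M (NM \<sigma> \<Otimes>\<^sub>M NM \<sigma>)) S"
    by (rule triple[OF sig S])
  finally show ?thesis unfolding Gn_def .
qed


lemma NM3_density:
  assumes sig: "\<sigma> > 0"
  shows "NM \<sigma> \<Otimes>\<^sub>M (NM \<sigma> \<Otimes>\<^sub>M NM \<sigma>) =
    density lborel (\<lambda>(a, b, c). ennreal (normal_density 0 \<sigma> a * normal_density 0 \<sigma> b * normal_density 0 \<sigma> c))"
proof -
  interpret N: prob_space "NM \<sigma>" by (rule prob_NM[OF sig])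
  have p2: "prob_space (NM \<sigma> \<Otimes>\<^sub>M NM \<sigma>)" by (intro prob_space_pair N.prob_space_axioms)
  have sfl: "sigma_finite_measure (lborel :: real measure)" by (rule sigma_finite_lborel)
  have sfl2: "sigma_finite_measure (lborel :: (real \<times> real) measure)" by (rule sigma_finite_lborel)
  have D2: "NM \<sigma> \<Otimes>\<^sub>M NM \<sigma> = density lborel (\<lambda>(b, c). ennreal (normal_density 0 \<sigma> b) * ennreal (normal_density 0 \<sigma> c))"
  proof -
    have "NM \<sigma> \<Otimes>\<^sub>M NM \<sigma> = density (lborel \<Otimes>\<^sub>M lborel) (\<lambda>(b, c). ennreal (normal_density 0 \<sigma> b) * ennreal (normal_density 0 \<sigma> c))"
      unfolding NM_def
      by (rule pair_measure_density) (auto simp: sfl N.sigma_finite_measure_axioms[unfolded NM_def])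
    then show ?thesis by (simp only: lborel_prod)
  qed
  have gm: "(\<lambda>(b, c). ennreal (normal_density 0 \<sigma> b) * ennreal (normal_density 0 \<sigma> c)) \<in> borel_measurable (borel :: (real \<times> real) measure)"
    unfolding case_prod_beta' borel_prod[symmetric] by measurable
  have "NM \<sigma> \<Otimes>\<^sub>M (NM \<sigma> \<Otimes>\<^sub>M NM \<sigma>) = density (lborel \<Otimes>\<^sub>M lborel)
       (\<lambda>(a, q). ennreal (normal_density 0 \<sigma> a) * (\<lambda>(b, c). ennreal (normal_density 0 \<sigma> b) * ennreal (normal_density 0 \<sigma> c)) q)"
    unfolding D2 unfolding NM_def
    by (rule pair_measure_density) (auto simp: sfl2 prob_space_imp_sigma_finite[OF p2[unfolded D2]] gm)
  also have "\<dots> = density lborel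
       (\<lambda>(a, q). ennreal (normal_density 0 \<sigma> a) * (\<lambda>(b, c). ennreal (normal_density 0 \<sigma> b) * ennreal (normal_density 0 \<sigma> c)) q)"
    by (simp only: lborel_prod)
  also have "\<dots> = density lborel (\<lambda>(a, b, c). ennreal (normal_density 0 \<sigma> a * normal_density 0 \<sigma> b * normal_density 0 \<sigma> c))"
    by (rule arg_cong[where f="density lborel"]) (auto simp: fun_eq_iff ennreal_mult mult.assoc)
  finally show ?thesis .
qed

lemma awgn_shift:
  "awgn_output s0 \<sigma> = distr (density lborel (\<lambda>w::real^'n. ennreal (\<Prod>k\<in>UNIV. normal_density 0 \<sigma> (w $ k)))) borel ((+) s0)"
proof -
  have "awgn_output s0 \<sigma> = density (distr lborel borel ((+) s0)) (\<lambda>y. ennreal (\<Prod>k\<in>UNIV. normal_density 0 \<sigma> (y $ k - s0 $ k)))"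
    by (simp add: awgn_output_def lborel_distr_plus)
  also have "\<dots> = distr (density lborel (\<lambda>z. ennreal (\<Prod>k\<in>UNIV. normal_density 0 \<sigma> ((s0 + z) $ k - s0 $ k)))) borel ((+) s0)"
    by (rule density_distr) auto
  also have "\<dots> = distr (density lborel (\<lambda>w::real^'n. ennreal (\<Prod>k\<in>UNIV. normal_density 0 \<sigma> (w $ k)))) borel ((+) s0)"
    by simp
  finally show ?thesis .
qed


theorem lemma2:
  fixes C :: "(bool^'n) set"
    and c1 c2 c :: "bool^'n"
    and e1 e2 e3 :: "real^'n"
    and \<theta> \<alpha> \<phi> \<sigma> :: real
  assumes lin: "binary_linear_code C"
    and mem: "c1 \<in> C" "c2 \<in> C" "c \<in> C"
    and distinct: "distinct [zero_word, c1, c2, c]"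
    and ortho: "e1 \<bullet> e1 = 1" "e2 \<bullet> e2 = 1" "e3 \<bullet> e3 = 1"
               "e1 \<bullet> e2 = 0" "e1 \<bullet> e3 = 0" "e2 \<bullet> e3 = 0"
    and ax1: "bpsk c1 - bpsk zero_word = norm (bpsk c1 - bpsk zero_word) *\<^sub>R e1"
    and ax2: "bpsk c2 - bpsk zero_word =
               ((bpsk c2 - bpsk zero_word) \<bullet> e1) *\<^sub>R e1 + ((bpsk c2 - bpsk zero_word) \<bullet> e2) *\<^sub>R e2"
             "(bpsk c2 - bpsk zero_word) \<bullet> e2 > 0"
    and ax3: "bpsk c - bpsk zero_word =
               ((bpsk c - bpsk zero_word) \<bullet> e1) *\<^sub>R e1 + ((bpsk c - bpsk zero_word) \<bullet> e2) *\<^sub>R e2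
               + ((bpsk c - bpsk zero_word) \<bullet> e3) *\<^sub>R e3"
             "(bpsk c - bpsk zero_word) \<bullet> e3 \<ge> 0"
    and theta: "0 < \<theta>" "\<theta> < pi"
      "bpsk c2 - bpsk zero_word = norm (bpsk c2 - bpsk zero_word) *\<^sub>R (cos \<theta> *\<^sub>R e1 + sin \<theta> *\<^sub>R e2)"
    and angles: "0 \<le> \<phi>" "\<phi> \<le> pi / 2"
      "bpsk c - bpsk zero_word = norm (bpsk c - bpsk zero_word) *\<^sub>R
          ((sin \<phi> * cos \<alpha>) *\<^sub>R e1 + (sin \<phi> * sin \<alpha>) *\<^sub>R e2 + cos \<phi> *\<^sub>R e3)"
    and sigma: "\<sigma> > 0"
  shows "measure (awgn_output (bpsk zero_word) \<sigma>)
           (pairwise_error (bpsk zero_word) (bpsk c1) \<union> pairwise_error (bpsk zero_word) (bpsk c2)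
            \<union> pairwise_error (bpsk zero_word) (bpsk c))
         = 1 - set_lebesgue_integral lborel
             {(\<xi>1::real, \<xi>2::real, \<xi>3::real).
                \<xi>1 < sqrt (real (hamming_weight c1)) \<and>
                \<xi>1 * cos \<theta> + \<xi>2 * sin \<theta> < sqrt (real (hamming_weight c2)) \<and>
                \<xi>1 * sin \<phi> * cos \<alpha> + \<xi>2 * sin \<phi> * sin \<alpha> + \<xi>3 * cos \<phi> < sqrt (real (hamming_weight c))}
             (\<lambda>(\<xi>1, \<xi>2, \<xi>3). normal_density 0 \<sigma> \<xi>1 * normal_density 0 \<sigma> \<xi>2 * normal_density 0 \<sigma> \<xi>3)"
proof -
  define s0 :: "real^'n" where "s0 = bpsk zero_word"
  define \<Omega> where "\<Omega> = {(\<xi>1::real, \<xi>2::real, \<xi>3::real).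
                \<xi>1 < sqrt (real (hamming_weight c1)) \<and>
                \<xi>1 * cos \<theta> + \<xi>2 * sin \<theta> < sqrt (real (hamming_weight c2)) \<and>
                \<xi>1 * sin \<phi> * cos \<alpha> + \<xi>2 * sin \<phi> * sin \<alpha> + \<xi>3 * cos \<phi> < sqrt (real (hamming_weight c))}"
  define hr where "hr = (\<lambda>(\<xi>1::real, \<xi>2::real, \<xi>3::real). normal_density 0 \<sigma> \<xi>1 * normal_density 0 \<sigma> \<xi>2 * normal_density 0 \<sigma> \<xi>3)"
  define G0 where "G0 = density lborel (\<lambda>w::real^'n. ennreal (\<Prod>k\<in>UNIV. normal_density 0 \<sigma> (w $ k)))"
  define G where "G = awgn_output s0 \<sigma>"
  define A where "A = pairwise_error s0 (bpsk c1) \<union> pairwise_error s0 (bpsk c2) \<union> pairwise_error s0 (bpsk c)"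
  define C where "C = {y. ((y - s0) \<bullet> e1, (y - s0) \<bullet> e2, (y - s0) \<bullet> e3) \<in> \<Omega>}"
  have nz: "c1 \<noteq> zero_word" "c2 \<noteq> zero_word" "c \<noteq> zero_word" using distinct by auto
  have pe1: "y \<in> pairwise_error s0 (bpsk c1) \<longleftrightarrow> (y - s0) \<bullet> e1 \<ge> sqrt (real (hamming_weight c1))" for y
    unfolding s0_def by (rule pe_char[OF nz(1) ax1])
  have pe2: "y \<in> pairwise_error s0 (bpsk c2) \<longleftrightarrow> (y - s0) \<bullet> (cos \<theta> *\<^sub>R e1 + sin \<theta> *\<^sub>R e2) \<ge> sqrt (real (hamming_weight c2))" for y
    unfolding s0_def by (rule pe_char[OF nz(2) theta(3)])
  have pe3: "y \<in> pairwise_error s0 (bpsk c) \<longleftrightarrow> (y - s0) \<bullet> ((sin \<phi> * cos \<alpha>) *\<^sub>R e1 + (sin \<phi> * sin \<alpha>) *\<^sub>R e2 + cos \<phi> *\<^sub>R e3) \<ge> sqrt (real (hamming_weight c))" for y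
    unfolding s0_def by (rule pe_char[OF nz(3) angles(3)])
  have compl: "UNIV - A = C"
    by (auto simp: A_def C_def \<Omega>_def pe1 pe2 pe3 inner_add_right inner_scaleR_right not_le mult_ac)
  have \<Omega>m: "\<Omega> \<in> sets (borel :: (real \<times> real \<times> real) measure)"
  proof -
    have e: "\<Omega> = {p. fst p < sqrt (real (hamming_weight c1))} \<inter>
       {p. fst p * cos \<theta> + fst (snd p) * sin \<theta> < sqrt (real (hamming_weight c2))} \<inter>
       {p. fst p * sin \<phi> * cos \<alpha> + fst (snd p) * sin \<phi> * sin \<alpha> + snd (snd p) * cos \<phi> < sqrt (real (hamming_weight c))}"
      by (auto simp: \<Omega>_def)
    have "open \<Omega>" unfolding e
      by (intro open_Int open_Collect_less continuous_intros)
    then show ?thesis by (rule borel_open)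
  qed
  have Cm: "C \<in> sets borel"
  proof -
    note \<Omega>m[measurable]
    show ?thesis unfolding C_def by measurable
  qed
  have Am: "A \<in> sets borel"
  proof -
    have "A = UNIV - C" using compl by auto
    then show ?thesis using Cm by auto
  qed
  have GG0: "G = distr G0 borel ((+) s0)" unfolding G_def G0_def by (rule awgn_shift)
  have shiftC: "emeasure G X = emeasure G0 {z. s0 + z \<in> X}" if "X \<in> sets borel" for X
    unfolding GG0 using that by (subst emeasure_distr) (auto simp: G0_def vimage_def)
  have NM3p: "prob_space (NM \<sigma> \<Otimes>\<^sub>M (NM \<sigma> \<Otimes>\<^sub>M NM \<sigma>))"
    by (intro prob_space_pair prob_NM[OF sigma])
  have projC: "emeasure G C = emeasure (NM \<sigma> \<Otimes>\<^sub>M (NM \<sigma> \<Otimes>\<^sub>M NM \<sigma>)) \<Omega>"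
    using shiftC[OF Cm] gauss_proj[OF sigma ortho \<Omega>m] by (simp add: C_def G0_def)
  have probG: "prob_space G"
  proof (rule prob_spaceI)
    have "emeasure G UNIV = emeasure (NM \<sigma> \<Otimes>\<^sub>M (NM \<sigma> \<Otimes>\<^sub>M NM \<sigma>)) UNIV"
      using shiftC[of UNIV] gauss_proj[OF sigma ortho, of UNIV] by (simp add: G0_def)
    also have "\<dots> = 1" using prob_space.emeasure_space_1[OF NM3p] by (simp add: space_pair_measure)
    finally show "emeasure G (space G) = 1" by (simp add: G_def awgn_output_def)
  qed
  have "measure G A = 1 - measure G C"
  proof -
    interpret PG: prob_space G by (rule probG)
    have spG: "space G = UNIV" by (simp add: G_def awgn_output_def)
    have "A \<in> PG.events" using Am by (simp add: G_def awgn_output_def)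
    then have "measure G (space G - A) = 1 - measure G A" by (rule PG.prob_compl)
    then show ?thesis using compl spG by simp
  qed
  also have "measure G C = set_lebesgue_integral lborel \<Omega> hr"
  proof -
    have hre: "hr = (\<lambda>p. normal_density 0 \<sigma> (fst p) * normal_density 0 \<sigma> (fst (snd p)) * normal_density 0 \<sigma> (snd (snd p)))"
      unfolding hr_def by (rule ext) (simp add: split_beta)
    have bp: "(borel :: (real \<times> real \<times> real) measure) = borel \<Otimes>\<^sub>M (borel \<Otimes>\<^sub>M borel)"
      by (simp only: borel_prod)
    have hrm: "hr \<in> borel_measurable (borel :: (real \<times> real \<times> real) measure)"
      unfolding hre bp by measurable
    have hr0: "hr p \<ge> 0" for p unfolding hre by simp
    have hd: "(\<lambda>(a, b, c). ennreal (normal_density 0 \<sigma> a * normal_density 0 \<sigma> b * normal_density 0 \<sigma> c)) = (\<lambda>p. ennreal (hr p))"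
      unfolding hre by (rule ext) (simp add: split_beta)
    have "measure G C = enn2real (emeasure (density lborel (\<lambda>p. ennreal (hr p))) \<Omega>)"
      unfolding measure_def projC NM3_density[OF sigma] hd ..
    also have "emeasure (density lborel (\<lambda>p. ennreal (hr p))) \<Omega> = (\<integral>\<^sup>+p. ennreal (hr p) * indicator \<Omega> p \<partial>lborel)"
      using \<Omega>m hrm by (subst emeasure_density) (auto simp: measurable_lborel1)
    also have "\<dots> = (\<integral>\<^sup>+p. ennreal (indicator \<Omega> p *\<^sub>R hr p) \<partial>lborel)"
      by (intro nn_integral_cong) (simp split: split_indicator)
    also have "enn2real \<dots> = set_lebesgue_integral lborel \<Omega> hr"
      unfolding set_lebesgue_integral_def
    proof (rule integral_eq_nn_integral[symmetric])
      show "(\<lambda>p. indicator \<Omega> p *\<^sub>R hr p) \<in> borel_measurable lborel"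
        using \<Omega>m hrm by (intro borel_measurable_scaleR borel_measurable_indicator) (simp_all add: measurable_lborel1)
      show "AE p in lborel. 0 \<le> indicator \<Omega> p *\<^sub>R hr p"
        using hr0 by (simp split: split_indicator)
    qed
    finally show ?thesis .
  qed
  finally show ?thesis by (simp add: G_def A_def s0_def \<Omega>_def hr_def)
qed


end
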